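(* Let $n$ be a positive integer, let $V$ be a set with $|V|=n$, and let $\sigma:[n]\to V$ be a bijection. Let $\mathcal{P}\subseteq P_s(V)$ be a signed-increasing property, and set $d=n-\operatorname{alt}(\mathcal{P},\sigma)-1$. If $d\neq -1$, then there is a map $\varphi:V\to S^d$ (i.e. a multiset $Z=\varphi(V)\subset S^d$ of size $n$ identified with $V$) such that for every $x\in S^d$, $$\bigl(\{v\in V:\varphi(v)\in H(x)\},\ \{v\in V:\varphi(v)\in H(-x)\}\bigr)\in\mathcal{P}.$$ Moreover, if $d\geq 1$, the map $\varphi$ can be chosen injective (so that $Z$ is a set).
   Context: For a positive integer $n$, $[n]=\{1,\dots,n\}$. $S^d\subset\mathbb{R}^{d+1}$ is the unit sphere, and for $x\in S^d$, $H(x)=\{y\in S^d:\langle x,y\rangle>0\}$ is the open hemisphere centered at $x$. For $X=(x_1,\dots,x_n)\in\{+,-,0\}^n$, an alternating subsequence of $X$ is a subsequence $x_{j_1},\dots,x_{j_m}$ ($j_1<\dots<j_m$) of nonzero terms such that consecutive terms have different signs; $\operatorname{alt}(X)$ is the length of a longest alternating subsequence, with $\operatorname{alt}(0,\dots,0)=0$. Set $X^+=\{j:x_j=+\}$, $X^-=\{j:x_j=-\}$. The signed-power set of $V$ is $P_s(V)=\{(A,B):A,B\subseteq V,\ A\cap B=\varnothing\}$, partially ordered by $(A,B)\subseteq(C,D)$ iff $A\subseteq C$ and $B\subseteq D$. A signed-increasing property is a family $\mathcal{P}\subseteq P_s(V)$ such that $F_1\in\mathcal{P}$ and $F_1\subseteq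 F_2\in P_s(V)$ imply $F_2\in\mathcal{P}$. For a bijection $\sigma:[n]\to V$ and $X\in\{+,-,0\}^n$, write $X_\sigma=(\sigma(X^+),\sigma(X^-))\in P_s(V)$, and define $$\operatorname{alt}(\mathcal{P},\sigma)=\max\{\operatorname{alt}(X): X\in\{+,-,0\}^n,\ X_\sigma\notin\mathcal{P}\}.$$ *)

theory Defs
  imports Complex_Main "HOL-Library.Sublist"
begin

datatype sgn = Pos | Neg | Zero

definition alt :: "sgn list \<Rightarrow> nat" where
  "alt X = Max {length ys | ys. subseq ys X \<and> Zero \<notin> set ys \<and> successively (\<noteq>) ys}"

definition signed_pow :: "'a set \<Rightarrow> ('a set \<times> 'a set) set" where
  "signed_pow V = {(A, B). A \<subseteq> V \<and> B \<subseteq> V \<and> A \<inter> B = {}}"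

definition signed_le :: "('a set \<times> 'a set) \<Rightarrow> ('a set \<times> 'a set) \<Rightarrow> bool" where
  "signed_le F1 F2 \<longleftrightarrow> fst F1 \<subseteq> fst F2 \<and> snd F1 \<subseteq> snd F2"

definition signed_increasing :: "'a set \<Rightarrow> ('a set \<times> 'a set) set \<Rightarrow> bool" where
  "signed_increasing V P \<longleftrightarrow> P \<subseteq> signed_pow V \<and>
     (\<forall>F1 \<in> P. \<forall>F2 \<in> signed_pow V. signed_le F1 F2 \<longrightarrow> F2 \<in> P)"

text \<open>X is a list of length n; its entry X!(i-1) is x_i for i in [n].\<close>
definition sig_apply :: "(nat \<Rightarrow> 'a) \<Rightarrow> sgn list \<Rightarrow> ('a set \<times> 'a set)" where
  "sig_apply \<sigma> X = (\<sigma> ` {i \<in> {1..length X}. X ! (i - 1) = Pos},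
                    \<sigma> ` {i \<in> {1..length X}. X ! (i - 1) = Neg})"

text \<open>If no X has X_sigma outside P (i.e. P is all of P_s(V)),
the maximum is over the empty set; we use the convention 0 (any convention
giving d >= 0 is harmless, since then every map works).\<close>
definition alt_P :: "nat \<Rightarrow> ('a set \<times> 'a set) set \<Rightarrow> (nat \<Rightarrow> 'a) \<Rightarrow> nat" where
  "alt_P n P \<sigma> = (let S = {alt X | X. length X = n \<and> sig_apply \<sigma> X \<notin> P}
                   in if S = {} then 0 else Max S)"

definition sphere_pts :: "nat \<Rightarrow> (nat \<Rightarrow> real) set" where
  "sphere_pts d = {x. (\<forall>i>d. x i = 0) \<and> (\<Sum>i\<le>d. (x i)^2) = 1}"

definition inner_d :: "nat \<Rightarrow> (nat \<Rightarrow> real) \<Rightarrow> (nat \<Rightarrow> real) \<Rightarrow> real" where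
  "inner_d d x y = (\<Sum>i\<le>d. x i * y i)"

definition hemi :: "nat \<Rightarrow> (nat \<Rightarrow> real) \<Rightarrow> (nat \<Rightarrow> real) set" where
  "hemi d x = {y \<in> sphere_pts d. inner_d d x y > 0}"

end

theory Submission
  imports Defs
begin

definition sg :: "real \<Rightarrow> sgn" where
  "sg r = (if r > 0 then Pos else if r < 0 then Neg else Zero)"

fun psum :: "real list \<Rightarrow> real list" where
  "psum (x # y # r) = (x + y) # psum (y # r)"
| "psum _ = []"

lemma sg_add: "sg (x + y) \<noteq> Zero \<Longrightarrow> sg (x + y) = sg x \<or> sg (x + y) = sg y"
  by (auto simp: sg_def split: if_splits)

lemma psum_subseq:
  "subseq ys (map sg (psum as)) \<Longrightarrow> Zero \<notin> set ys \<Longrightarrow> successively (\<noteq>) ys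
   \<Longrightarrow> subseq ys (map sg as)"
proof (induction as arbitrary: ys rule: psum.induct)
  case (1 x y r)
  have IH: "\<And>ys. subseq ys (map sg (psum (y # r))) \<Longrightarrow> Zero \<notin> set ys \<Longrightarrow> successively (\<noteq>) ys
   \<Longrightarrow> subseq ys (sg y # map sg r)" using 1(1) by simp
  have h: "subseq ys (sg (x+y) # map sg (psum (y # r)))" using 1(2) by simp
  show ?case
  proof (cases ys)
    case Nil then show ?thesis by simp
  next
    case (Cons z zs)
    show ?thesis
    proof (cases "z = sg (x+y)")
      case False
      then have "subseq ys (map sg (psum (y # r)))" using h Cons by simp
      then have "subseq ys (sg y # map sg r)" using IH 1 by blast
      then show ?thesis by (simp add: list_emb.list_emb_Cons)
    next
      case True
      have zs: "subseq zs (map sg (psum (y # r)))" using h Cons True by simp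
      have zsz: "Zero \<notin> set zs" "successively (\<noteq>) zs" using 1(3,4) Cons
        by (auto simp: successively_Cons)
      have zsy: "subseq zs (sg y # map sg r)" using IH zs zsz by blast
      have zne: "z \<noteq> Zero" using 1(3) Cons by auto
      from sg_add[of x y] zne True have "z = sg x \<or> z = sg y" by auto
      then show ?thesis
      proof
        assume "z = sg x" then show ?thesis using Cons zsy by simp
      next
        assume zy: "z = sg y"
        have "subseq zs (map sg r)"
        proof (cases zs)
          case Nil then show ?thesis by simp
        next
          case (Cons w ws)
          have "w \<noteq> z" using 1(4) \<open>ys = z # zs\<close> Cons by auto
          then show ?thesis using zsy Cons zy by simp
        qed
        then show ?thesis using Cons zy by (auto intro: list_emb.list_emb_Cons)
      qed
    qed
  qed
qed auto

definition altset :: "sgn list \<Rightarrow> nat set" where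
  "altset X = {length ys | ys. subseq ys X \<and> Zero \<notin> set ys \<and> successively (\<noteq>) ys}"

lemma altset_fin: "finite (altset X)"
proof -
  have "altset X \<subseteq> {..length X}" unfolding altset_def using list_emb_length by fastforce
  then show ?thesis using finite_subset by blast
qed

lemma altset_ne: "altset X \<noteq> {}"
proof -
  have "0 \<in> altset X" unfolding altset_def by force
  then show ?thesis by blast
qed

lemma alt_altset: "alt X = Max (altset X)"
  unfolding alt_def altset_def by simp

lemma alt_le_length: "alt X \<le> length X"
  unfolding alt_altset using altset_fin altset_ne
  unfolding altset_def using list_emb_length by (fastforce simp: Max_le_iff)

lemma alt_psum: "alt (map sg (psum as)) \<le> alt (map sg as)"
  unfolding alt_altset
proof (rule Max_mono[OF _ altset_ne altset_fin])
  show "altset (map sg (psum as)) \<subseteq> altset (map sg as)"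
    unfolding altset_def using psum_subseq by blast
qed

lemma alt_full: "Zero \<notin> set X \<Longrightarrow> successively (\<noteq>) X \<Longrightarrow> length X \<le> alt X"
  unfolding alt_altset
proof (rule Max_ge[OF altset_fin])
  assume "Zero \<notin> set X" "successively (\<noteq>) X"
  then show "length X \<in> altset X" unfolding altset_def by blast
qed

lemma psum_map_upt:
  "psum (map f [k..<k + Suc m]) = map (\<lambda>i. f i + f (Suc i)) [k..<k + m]"
proof (induction m arbitrary: k)
  case 0 then show ?case by simp
next
  case (Suc m)
  have e1: "[k..<k + Suc (Suc m)] = k # [Suc k..<Suc k + Suc m]"
    by (simp add: upt_conv_Cons del: upt_Suc)
  have e2: "[Suc k..<Suc k + Suc m] = Suc k # [Suc (Suc k)..<Suc k + Suc m]"
    by (simp add: upt_conv_Cons del: upt_Suc)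
  have e3: "[k..<k + Suc m] = k # [Suc k..<Suc k + m]" by (simp add: upt_conv_Cons del: upt_Suc)
  have "psum (map f [k..<k + Suc (Suc m)]) = (f k + f (Suc k)) # psum (map f [Suc k..<Suc k + Suc m])"
    unfolding e1 e2 by (simp del: upt_Suc)
  also have "\<dots> = (f k + f (Suc k)) # map (\<lambda>i. f i + f (Suc i)) [Suc k..<Suc k + m]"
    using Suc[of "Suc k"] by simp
  also have "\<dots> = map (\<lambda>i. f i + f (Suc i)) [k..<k + Suc m]" unfolding e3 by simp
  finally show ?case .
qed


lemma succ_upt: "(\<And>i. P i (Suc i)) \<Longrightarrow> successively P [k..<k+m]"
proof (induction m arbitrary: k)
  case 0 then show ?case by simp
next
  case (Suc m)
  have e: "[k..<k + Suc m] = k # [Suc k..<Suc k + m]" by (simp add: upt_conv_Cons del: upt_Suc)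
  show ?case unfolding e using Suc.IH[of "Suc k"] Suc.prems
    by (cases m) (auto simp: successively_Cons upt_conv_Cons simp del: upt_Suc)
qed

definition u :: "(nat \<Rightarrow> real) \<Rightarrow> nat \<Rightarrow> nat \<Rightarrow> real" where
  "u x D i = (\<Sum>j\<le>D. x j * real (i choose j))"

definition aseq :: "(nat \<Rightarrow> real) \<Rightarrow> nat \<Rightarrow> nat \<Rightarrow> real list" where
  "aseq x D n = map (\<lambda>i. (-1)^(i+D) * u x D i) [0..<n]"

lemma u_diff: "u x (Suc D) (Suc i) - u x (Suc D) i = u (\<lambda>j. x (Suc j)) D i"
proof -
  have "u x (Suc D) (Suc i) - u x (Suc D) i = (\<Sum>j\<le>Suc D. x j * (real (Suc i choose j) - real (i choose j)))"
    unfolding u_def by (simp add: sum_subtractf algebra_simps)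
  also have "\<dots> = (\<Sum>j\<le>D. x (Suc j) * (real (Suc i choose Suc j) - real (i choose Suc j)))"
    by (subst sum.atMost_Suc_shift) simp
  also have "\<dots> = u (\<lambda>j. x (Suc j)) D i" unfolding u_def by simp
  finally show ?thesis .
qed

lemma u_const: "(\<forall>j\<in>{1..D}. x j = 0) \<Longrightarrow> u x D i = x 0"
proof (cases D)
  case 0 then show ?thesis by (simp add: u_def)
next
  case (Suc D')
  assume a: "\<forall>j\<in>{1..D}. x j = 0"
  have "u x D i = x 0 + (\<Sum>j\<le>D'. x (Suc j) * real (i choose Suc j))"
    unfolding u_def Suc by (subst sum.atMost_Suc_shift) simp
  also have "(\<Sum>j\<le>D'. x (Suc j) * real (i choose Suc j)) = 0"
    using a Suc by (intro sum.neutral) auto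
  finally show ?thesis by simp
qed

lemma sg_neg: "r \<noteq> 0 \<Longrightarrow> sg (- r) \<noteq> sg r"
  by (auto simp: sg_def)

lemma sg_nz: "r \<noteq> 0 \<Longrightarrow> sg r \<noteq> Zero"
  by (auto simp: sg_def)

lemma const_case:
  assumes "\<forall>j\<in>{1..D}. x j = 0" "x 0 \<noteq> 0"
  shows "n \<le> alt (map sg (aseq x D n))"
proof -
  have e: "aseq x D n = map (\<lambda>i. (-1)^(i+D) * x 0) [0..<n]"
    unfolding aseq_def using u_const[OF assms(1)] by simp
  have nz: "\<And>i. sg ((-1)^(i+D) * x 0) \<noteq> Zero" using sg_nz assms(2) by simp
  have "Zero \<notin> set (map sg (aseq x D n))" unfolding e using nz by (auto simp: eq_commute[of Zero])
  moreover have "successively (\<noteq>) (map sg (aseq x D n))"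
  proof -
    have "\<And>i. sg ((-1)^(i+D) * x 0) \<noteq> sg ((-1)^(Suc i+D) * x 0)"
    proof -
      fix i
      have "(-1::real)^(Suc i+D) * x 0 = - ((-1)^(i+D) * x 0)" by simp
      moreover have "(-1::real)^(i+D) * x 0 \<noteq> 0" using assms(2) by simp
      ultimately show "sg ((-1)^(i+D) * x 0) \<noteq> sg ((-1)^(Suc i+D) * x 0)"
        using sg_neg by metis
    qed
    then have "successively (\<lambda>a b. sg ((-1)^(a+D) * x 0) \<noteq> sg ((-1)^(b+D) * x 0)) [0..<0+n]"
      by (rule succ_upt)
    then show ?thesis unfolding e successively_map by simp
  qed
  moreover have "length (map sg (aseq x D n)) = n" by (simp add: aseq_def)
  ultimately show ?thesis using alt_full by metis
qed

lemma step_eq: "(-1::real)^(i+Suc D) * u x (Suc D) i + (-1)^(Suc i+Suc D) * u x (Suc D) (Suc i)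
   = (-1)^(i+D) * u (\<lambda>j. x (Suc j)) D i"
proof -
  have a: "(-1::real)^(i+Suc D) = - ((-1)^(i+D))" by simp
  have b: "(-1::real)^(Suc i+Suc D) = (-1)^(i+D)" by simp
  show ?thesis unfolding a b u_diff[symmetric] by (simp add: right_diff_distrib)
qed

lemma psum_aseq: "psum (aseq x (Suc D) (Suc m)) = aseq (\<lambda>j. x (Suc j)) D m"
proof -
  have "psum (aseq x (Suc D) (Suc m)) =
     map (\<lambda>i. (-1)^(i+Suc D) * u x (Suc D) i + (-1)^(Suc i+Suc D) * u x (Suc D) (Suc i)) [0..<m]"
    unfolding aseq_def using psum_map_upt[of "\<lambda>i. (-1)^(i+Suc D) * u x (Suc D) i" 0 m] by simp
  also have "\<dots> = aseq (\<lambda>j. x (Suc j)) D m" unfolding aseq_def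
    by (intro map_cong refl) (rule step_eq)
  finally show ?thesis .
qed

lemma main_alt:
  "(\<exists>j\<le>D. x j \<noteq> 0) \<Longrightarrow> n \<le> alt (map sg (aseq x D n)) + D"
proof (induction D arbitrary: x n)
  case 0
  then have "x 0 \<noteq> 0" by simp
  then show ?case using const_case[of 0 x n] by simp
next
  case (Suc D)
  show ?case
  proof (cases "\<forall>j\<in>{1..Suc D}. x j = 0")
    case True
    from Suc.prems obtain j where j: "j \<le> Suc D" "x j \<noteq> 0" by blast
    then have "j = 0" using True by (cases j) auto
    then have "x 0 \<noteq> 0" using j by simp
    then have "n \<le> alt (map sg (aseq x (Suc D) n))" using const_case[OF True] by blast
    then show ?thesis by simp
  next
    case False
    define x' where "x' = (\<lambda>j. x (Suc j))"
    obtain j where j: "j \<in> {1..Suc D}" "x j \<noteq> 0" using False by blast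
    then obtain j' where j': "j = Suc j'" by (cases j) auto
    have nz: "\<exists>j\<le>D. x' j \<noteq> 0" using j j' unfolding x'_def by auto
    show ?thesis
    proof (cases n)
      case 0 then show ?thesis by simp
    next
      case (Suc m)
      have "psum (aseq x (Suc D) (Suc m)) = aseq x' D m" unfolding x'_def by (rule psum_aseq)
      then have "alt (map sg (aseq x' D m)) \<le> alt (map sg (aseq x (Suc D) (Suc m)))"
        using alt_psum[of "aseq x (Suc D) (Suc m)"] by simp
      moreover have "m \<le> alt (map sg (aseq x' D m)) + D" using Suc.IH[OF nz] .
      ultimately show ?thesis using \<open>n = Suc m\<close> by simp
    qed
  qed
qed


definition NN :: "nat \<Rightarrow> nat \<Rightarrow> real" where
  "NN D i = sqrt (\<Sum>j\<le>D. (real (i choose j))^2)"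

definition pt :: "nat \<Rightarrow> nat \<Rightarrow> nat \<Rightarrow> real" where
  "pt D i = (\<lambda>j. if j \<le> D then (-1)^(i+D) * real (i choose j) / NN D i else 0)"

lemma NN_sq_pos: "(\<Sum>j\<le>D. (real (i choose j))^2) > 0"
proof -
  have "(\<Sum>j\<le>D. (real (i choose j))^2) \<ge> (\<Sum>j\<in>{0}. (real (i choose j))^2)"
    by (rule sum_mono2) auto
  then show ?thesis by simp
qed

lemma NN_pos: "NN D i > 0"
  unfolding NN_def using NN_sq_pos by simp

lemma pt_sphere: "pt D i \<in> sphere_pts D"
proof -
  have "(\<Sum>j\<le>D. (pt D i j)^2) = (\<Sum>j\<le>D. (real (i choose j))^2 / (NN D i)^2)"
    unfolding pt_def by (intro sum.cong refl) (simp add: power_mult_distrib power_divide flip: power_mult)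
  also have "\<dots> = (\<Sum>j\<le>D. (real (i choose j))^2) / (NN D i)^2"
    by (simp add: sum_divide_distrib)
  also have "\<dots> = 1" unfolding NN_def using NN_sq_pos[where D=D and i=i] by simp
  finally show ?thesis unfolding sphere_pts_def by (auto simp: pt_def)
qed

lemma pt_inner: "inner_d D x (pt D i) = (-1)^(i+D) * u x D i / NN D i"
  unfolding inner_d_def pt_def u_def
  by (simp add: sum_divide_distrib sum_distrib_left algebra_simps)

lemma pt_inj: "1 \<le> D \<Longrightarrow> pt D i = pt D i' \<Longrightarrow> i = i'"
proof -
  assume D: "1 \<le> D" and e: "pt D i = pt D i'"
  have a0: "pt D i 0 = pt D i' 0" using e by simp
  have a1: "pt D i 1 = pt D i' 1" using e by simp
  have q0: "pt D k 0 = (-1)^(k+D) / NN D k" for k by (simp add: pt_def)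
  have q1: "pt D k 1 = (-1)^(k+D) * real k / NN D k" for k using D by (simp add: pt_def)
  have p1: "pt D k 1 = pt D k 0 * real k" for k unfolding q0 q1 by simp
  have nz: "pt D i 0 \<noteq> 0" unfolding q0 using NN_pos[of D i] by simp
  have "pt D i 0 * real i = pt D i 0 * real i'" using a0 a1 p1[of i] p1[of i'] by simp
  then have "real i = real i'" using nz by simp
  then show "i = i'" by simp
qed

lemma bij_image_eq:
  assumes "bij_betw \<sigma> I V"
  shows "\<sigma> ` {i\<in>I. Q i} = {v\<in>V. Q (inv_into I \<sigma> v)}"
proof -
  have inj: "inj_on \<sigma> I" and im: "\<sigma> ` I = V" using assms by (auto simp: bij_betw_def)
  show ?thesis
  proof
    show "\<sigma> ` {i\<in>I. Q i} \<subseteq> {v\<in>V. Q (inv_into I \<sigma> v)}"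
    proof
      fix v assume "v \<in> \<sigma> ` {i\<in>I. Q i}"
      then obtain i where i: "i \<in> I" "Q i" "v = \<sigma> i" by blast
      have "inv_into I \<sigma> v = i" using inv_into_f_f[OF inj i(1)] i(3) by simp
      moreover have "v \<in> V" using im i by blast
      ultimately show "v \<in> {v\<in>V. Q (inv_into I \<sigma> v)}" using i by simp
    qed
  next
    show "{v\<in>V. Q (inv_into I \<sigma> v)} \<subseteq> \<sigma> ` {i\<in>I. Q i}"
    proof
      fix v assume v: "v \<in> {v\<in>V. Q (inv_into I \<sigma> v)}"
      then have vv: "v \<in> \<sigma> ` I" using im by simp
      have "inv_into I \<sigma> v \<in> I" by (rule inv_into_into[OF vv])
      moreover have "\<sigma> (inv_into I \<sigma> v) = v" by (rule f_inv_into_f[OF vv])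
      moreover have "Q (inv_into I \<sigma> v)" using v by simp
      ultimately show "v \<in> \<sigma> ` {i\<in>I. Q i}" by (metis (mono_tags, lifting) image_eqI mem_Collect_eq)
    qed
  qed
qed


theorem lemma1:
  fixes n :: nat and V :: "'a set" and \<sigma> :: "nat \<Rightarrow> 'a"
    and P :: "('a set \<times> 'a set) set" and d :: int
  assumes "n > 0" and "finite V" and "card V = n"
    and "bij_betw \<sigma> {1..n} V"
    and "signed_increasing V P"
    and "d = int n - int (alt_P n P \<sigma>) - 1"
    and "d \<noteq> -1"
  shows "\<exists>\<phi> :: 'a \<Rightarrow> (nat \<Rightarrow> real).
           (\<forall>v\<in>V. \<phi> v \<in> sphere_pts (nat d)) \<and>
           (\<forall>x\<in>sphere_pts (nat d).
              ({v\<in>V. \<phi> v \<in> hemi (nat d) x}, {v\<in>V. \<phi> v \<in> hemi (nat d) (\<lambda>i. - x i)}) \<in> P) \<and>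
           (d \<ge> 1 \<longrightarrow> inj_on \<phi> V)"
proof -
  define k where "k = alt_P n P \<sigma>"
  define D where "D = nat d"
  define S where "S = {alt X | X. length X = n \<and> sig_apply \<sigma> X \<notin> P}"
  have kle: "alt_P n P \<sigma> \<le> n"
  proof -
    have "S \<subseteq> {..n}" unfolding S_def using alt_le_length by fastforce
    then have "finite S" "\<forall>s\<in>S. s \<le> n" using finite_subset by auto
    then show ?thesis unfolding alt_P_def Let_def S_def[symmetric]
      by (auto simp: Max_le_iff)
  qed
  have dD: "D + k + 1 = n" using assms(6,7) kle unfolding D_def k_def by linarith
  have dD': "int D = d" using assms(6,7) kle unfolding D_def by linarith
  have bij: "bij_betw \<sigma> {1..n} V" by fact
  have inj: "inj_on \<sigma> {1..n}" and im: "\<sigma> ` {1..n} = V" using bij by (auto simp: bij_betw_def)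
  define \<iota> where "\<iota> = inv_into {1..n} \<sigma>"
  have iota_in: "\<iota> v \<in> {1..n}" if "v \<in> V" for v
    unfolding \<iota>_def using inv_into_into[of v \<sigma> "{1..n}"] that im by simp
  have iota_inv: "\<sigma> (\<iota> v) = v" if "v \<in> V" for v
    unfolding \<iota>_def using f_inv_into_f[of v \<sigma> "{1..n}"] that im by simp
  define \<phi> where "\<phi> = (\<lambda>v. pt D (\<iota> v - 1))"
  have sph: "\<forall>v\<in>V. \<phi> v \<in> sphere_pts (nat d)"
    unfolding \<phi>_def D_def[symmetric] using pt_sphere by blast
  have hem: "({v\<in>V. \<phi> v \<in> hemi (nat d) x}, {v\<in>V. \<phi> v \<in> hemi (nat d) (\<lambda>i. - x i)}) \<in> P"
    if x: "x \<in> sphere_pts (nat d)" for x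
  proof -
    have xD: "x \<in> sphere_pts D" using x D_def by simp
    have "\<exists>j\<le>D. x j \<noteq> 0"
    proof (rule ccontr)
      assume "\<not> (\<exists>j\<le>D. x j \<noteq> 0)"
      then have "(\<Sum>i\<le>D. (x i)^2) = 0" by simp
      then show False using xD unfolding sphere_pts_def by simp
    qed
    then have altY: "n \<le> alt (map sg (aseq x D n)) + D" by (rule main_alt)
    define Y where "Y = map sg (aseq x D n)"
    have lenY: "length Y = n" unfolding Y_def aseq_def by simp
    have Ynth: "Y ! (i - 1) = sg ((-1)^(i - 1 + D) * u x D (i - 1))" if "i \<in> {1..n}" for i
      using that unfolding Y_def aseq_def by auto
    have inner_phi: "inner_d D x (\<phi> v) = (-1)^(\<iota> v - 1 + D) * u x D (\<iota> v - 1) / NN D (\<iota> v - 1)" for v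
      unfolding \<phi>_def by (rule pt_inner)
    have innm: "inner_d D (\<lambda>i. - x i) y = - inner_d D x y" for y
      unfolding inner_d_def by (simp add: sum_negf)
    have c1: "(\<phi> v \<in> hemi D x) = (Y ! (\<iota> v - 1) = Pos)" if "v \<in> V" for v
    proof -
      have "0 < NN D (\<iota> v - 1)" by (rule NN_pos)
      then show ?thesis using Ynth[OF iota_in[OF that]] inner_phi[of v] sph that
        unfolding hemi_def D_def[symmetric]
        by (auto simp: sg_def divide_pos_pos zero_less_divide_iff split: if_splits)
    qed
    have c2: "(\<phi> v \<in> hemi D (\<lambda>i. - x i)) = (Y ! (\<iota> v - 1) = Neg)" if "v \<in> V" for v
    proof -
      have "0 < NN D (\<iota> v - 1)" by (rule NN_pos)
      then show ?thesis using Ynth[OF iota_in[OF that]] inner_phi[of v] sph that innm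
        unfolding hemi_def D_def[symmetric]
        by (auto simp: sg_def zero_less_divide_iff divide_less_0_iff split: if_splits)
    qed
    have sa: "sig_apply \<sigma> Y = ({v\<in>V. \<phi> v \<in> hemi (nat d) x}, {v\<in>V. \<phi> v \<in> hemi (nat d) (\<lambda>i. - x i)})"
    proof -
      have "sig_apply \<sigma> Y = ({v\<in>V. Y ! (\<iota> v - 1) = Pos}, {v\<in>V. Y ! (\<iota> v - 1) = Neg})"
        unfolding sig_apply_def lenY bij_image_eq[OF bij] \<iota>_def[symmetric] by (rule refl)
      also have "\<dots> = ({v\<in>V. \<phi> v \<in> hemi (nat d) x}, {v\<in>V. \<phi> v \<in> hemi (nat d) (\<lambda>i. - x i)})"
        using c1 c2 unfolding D_def by auto
      finally show ?thesis .
    qed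
    show ?thesis
    proof (rule ccontr)
      assume nP: "\<not> ?thesis"
      then have "alt Y \<in> S" unfolding S_def using sa lenY by auto
      moreover have "finite S"
      proof -
        have "S \<subseteq> {..n}" unfolding S_def using alt_le_length by fastforce
        then show ?thesis using finite_subset by auto
      qed
      ultimately have "alt Y \<le> Max S" by simp
      moreover have "Max S = k" using \<open>alt Y \<in> S\<close> unfolding k_def alt_P_def Let_def S_def[symmetric] by auto
      ultimately show False using altY dD unfolding Y_def by simp
    qed
  qed
  have injp: "d \<ge> 1 \<longrightarrow> inj_on \<phi> V"
  proof
    assume "d \<ge> 1"
    then have D1: "1 \<le> D" unfolding D_def by simp
    show "inj_on \<phi> V"
    proof (rule inj_onI)
      fix v w assume v: "v \<in> V" and w: "w \<in> V" and e: "\<phi> v = \<phi> w"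
      have "\<iota> v - 1 = \<iota> w - 1" using pt_inj[OF D1] e unfolding \<phi>_def by blast
      then have "\<iota> v = \<iota> w" using iota_in[OF v] iota_in[OF w] by auto
      then show "v = w" using iota_inv[OF v] iota_inv[OF w] by metis
    qed
  qed
  show ?thesis using sph hem injp by blast
qed

end
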